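(* For every integer $n>24$, the generalized Petersen graph $GP(n,4)$ is not $2$-distance-balanced.
   Context: For a connected graph $G$ and $x,y\in V(G)$, $d_G(x,y)$ denotes the distance. Let $W_{xy}=\{w\in V(G): d_G(w,x)<d_G(w,y)\}$. $G$ is called $\ell$-distance-balanced if $|W_{xy}|=|W_{yx}|$ for every pair $x,y\in V(G)$ with $d_G(x,y)=\ell$. For integers $n\ge 3$ and $1\le k<n/2$, the generalized Petersen graph $GP(n,k)$ has vertex set $\{u_i: i\in\mathbb{Z}_n\}\cup\{v_i: i\in\mathbb{Z}_n\}$ and edge set $\{u_iu_{i+1}: i\in\mathbb{Z}_n\}\cup\{v_iv_{i+k}: i\in\mathbb{Z}_n\}\cup\{u_iv_i: i\in\mathbb{Z}_n\}$. *)

theory Defs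
  imports Main
begin

fun is_walk :: "('a \<Rightarrow> 'a \<Rightarrow> bool) \<Rightarrow> 'a list \<Rightarrow> bool" where
  "is_walk E [] = False"
| "is_walk E [x] = True"
| "is_walk E (x # y # xs) = (E x y \<and> is_walk E (y # xs))"

text \<open>Graph distance: least number of edges of a walk from x to y inside V
  (only meaningful for connected graphs, which is the case considered).\<close>
definition gdist :: "'a set \<Rightarrow> ('a \<Rightarrow> 'a \<Rightarrow> bool) \<Rightarrow> 'a \<Rightarrow> 'a \<Rightarrow> nat" where
  "gdist V E x y = (LEAST m. \<exists>p. is_walk E p \<and> set p \<subseteq> V \<and> hd p = x \<and> last p = y
                                  \<and> length p = Suc m)"

definition W_set :: "'a set \<Rightarrow> ('a \<Rightarrow> 'a \<Rightarrow> bool) \<Rightarrow> 'a \<Rightarrow> 'a \<Rightarrow> 'a set" where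
  "W_set V E x y = {w \<in> V. gdist V E w x < gdist V E w y}"

definition distance_balanced :: "nat \<Rightarrow> 'a set \<Rightarrow> ('a \<Rightarrow> 'a \<Rightarrow> bool) \<Rightarrow> bool" where
  "distance_balanced l V E \<longleftrightarrow>
     (\<forall>x\<in>V. \<forall>y\<in>V. gdist V E x y = l \<longrightarrow> card (W_set V E x y) = card (W_set V E y x))"

text \<open>Generalized Petersen graph GP(n,k): vertex (False, i) is u_i, (True, i) is v_i,
  with i ranging over {0..<n} representing Z_n.\<close>
definition gp_verts :: "nat \<Rightarrow> (bool \<times> nat) set" where
  "gp_verts n = {(b, i). i < n}"

definition gp_adj :: "nat \<Rightarrow> nat \<Rightarrow> (bool \<times> nat) \<Rightarrow> (bool \<times> nat) \<Rightarrow> bool" where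
  "gp_adj n k a c = (case (a, c) of
      ((False, i), (False, j)) \<Rightarrow> i < n \<and> j < n \<and> (j = (i + 1) mod n \<or> i = (j + 1) mod n)
    | ((True, i), (True, j)) \<Rightarrow> i < n \<and> j < n \<and> (j = (i + k) mod n \<or> i = (j + k) mod n)
    | ((False, i), (True, j)) \<Rightarrow> i < n \<and> i = j
    | ((True, i), (False, j)) \<Rightarrow> i < n \<and> i = j)"

end

theory Submission
  imports Defs
begin


lemma walk_lip:
  assumes lip: "\<And>a b. a \<in> V \<Longrightarrow> b \<in> V \<Longrightarrow> E a b \<Longrightarrow> f a \<le> f b + (1::nat)"
  shows "is_walk E p \<Longrightarrow> set p \<subseteq> V \<Longrightarrow> f (hd p) \<le> f (last p) + (length p - 1)"
proof (induction p)
  case (Cons x xs)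
  show ?case
  proof (cases xs)
    case (Cons y ys)
    then show ?thesis using Cons.IH Cons.prems lip[of x y] by force
  qed simp
qed simp

lemma walk_exists:
  assumes xV: "x \<in> V" and fx: "f x = (0::nat)"
    and lip: "\<And>a b. a \<in> V \<Longrightarrow> b \<in> V \<Longrightarrow> E a b \<Longrightarrow> f a \<le> f b + 1"
    and desc: "\<And>w. w \<in> V \<Longrightarrow> w \<noteq> x \<Longrightarrow> \<exists>w'\<in>V. E w w' \<and> f w' < f w"
  shows "w \<in> V \<Longrightarrow> f w = k \<Longrightarrow> \<exists>p. is_walk E p \<and> set p \<subseteq> V \<and> hd p = w \<and> last p = x \<and> length p = Suc k"
proof (induction k arbitrary: w)
  case 0
  then have "w = x" using desc by fastforce
  then show ?case using xV by (intro exI[of _ "[x]"]) auto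
next
  case (Suc k)
  then have "w \<noteq> x" using fx by auto
  then obtain w' where w': "w' \<in> V" "E w w'" "f w' < f w" using desc Suc.prems by blast
  then have "f w' = k" using lip[of w w'] Suc.prems by auto
  then obtain p where p: "is_walk E p" "set p \<subseteq> V" "hd p = w'" "last p = x" "length p = Suc k"
    using Suc.IH w' by blast
  then obtain ys where "p = w' # ys" by (cases p) auto
  then show ?case using p w' Suc.prems by (intro exI[of _ "w # p"]) auto
qed

lemma gdist_eq:
  assumes xV: "x \<in> V" and fx: "f x = (0::nat)"
    and lip: "\<And>a b. a \<in> V \<Longrightarrow> b \<in> V \<Longrightarrow> E a b \<Longrightarrow> f a \<le> f b + 1"
    and desc: "\<And>w. w \<in> V \<Longrightarrow> w \<noteq> x \<Longrightarrow> \<exists>w'\<in>V. E w w' \<and> f w' < f w"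
    and wV: "w \<in> V"
  shows "gdist V E w x = f w"
  unfolding gdist_def
proof (rule Least_equality)
  show "\<exists>p. is_walk E p \<and> set p \<subseteq> V \<and> hd p = w \<and> last p = x \<and> length p = Suc (f w)"
    using walk_exists[OF xV fx lip desc wV] by blast
next
  fix m assume "\<exists>p. is_walk E p \<and> set p \<subseteq> V \<and> hd p = w \<and> last p = x \<and> length p = Suc m"
  then obtain p where p: "is_walk E p" "set p \<subseteq> V" "hd p = w" "last p = x" "length p = Suc m" by blast
  show "f w \<le> m" using walk_lip[of V E f p, OF lip p(1,2)] p fx by simp
qed



lemma adj_iff:
  "gp_adj n k (b1, i) (b2, j) \<longleftrightarrow>
     (\<not> b1 \<and> \<not> b2 \<and> i < n \<and> j < n \<and> (j = (i + 1) mod n \<or> i = (j + 1) mod n)) \<or>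
     (b1 \<and> b2 \<and> i < n \<and> j < n \<and> (j = (i + k) mod n \<or> i = (j + k) mod n)) \<or>
     (b1 \<noteq> b2 \<and> i < n \<and> i = j)"
  by (cases b1; cases b2) (auto simp: gp_adj_def)

definition rot :: "nat \<Rightarrow> nat \<Rightarrow> bool \<times> nat \<Rightarrow> bool \<times> nat" where
  "rot n j w = (fst w, (snd w + j) mod n)"

lemma rot_V: "0 < n \<Longrightarrow> rot n j w \<in> gp_verts n"
  by (cases w) (auto simp: rot_def gp_verts_def)

lemma mod_shift: "((i + k) mod n + j) mod n = ((i + j) mod n + k) mod (n::nat)"
  by (metis add.commute add.left_commute mod_add_left_eq)

lemma adj_rot:
  assumes "0 < n" "gp_adj n k a b" shows "gp_adj n k (rot n j a) (rot n j b)"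
proof -
  obtain b1 i b2 i' where ab: "a = (b1, i)" "b = (b2, i')" by (cases a, cases b) auto
  have m: "\<And>x. (x + j) mod n < n" using assms(1) by simp
  have s1: "\<And>x. ((x + 1) mod n + j) mod n = ((x + j) mod n + 1) mod n"
    by (rule mod_shift)
  have s2: "\<And>x. ((x + k) mod n + j) mod n = ((x + j) mod n + k) mod n"
    by (rule mod_shift)
  from assms(2) show ?thesis unfolding ab rot_def adj_iff fst_conv snd_conv
    using m s1 s2 by metis
qed

lemma rot_inv: "4 \<le> n \<Longrightarrow> w \<in> gp_verts n \<Longrightarrow> rot n 4 (rot n (n - 4) w) = w"
  by (cases w) (auto simp: rot_def gp_verts_def mod_add_left_eq)


definition g :: "nat \<Rightarrow> nat" where
  "g m = m div 4 + (if m mod 4 = 0 then 0 else if m mod 4 = 1 then 1 else 2)"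
lemma g_small: "g 0 = 0" "g 1 = 1" "g 2 = 2" "g 3 = 2" "g 4 = 1" "g 5 = 2" "g 6 = 3" "g 7 = 3"
  "g (Suc 0) = 1" "g (Suc (Suc 0)) = 2"
  by (simp_all add: g_def)
lemma g_plus4: "g (m + 4) = g m + 1"
  unfolding g_def using div_add_self2[of 4 m] mod_add_self2[of m 4] by simp
lemma g_plus4': "g (4 + m) = g m + 1" "g (5 + m) = g (Suc m) + 1" "g (Suc (m + 4)) = g (Suc m) + 1"
  using g_plus4[of m] g_plus4[of "Suc m"] by (simp_all add: add.commute)
lemma ind4: fixes m :: nat assumes "\<And>m. m < 4 \<Longrightarrow> P m" "\<And>m. P m \<Longrightarrow> P (m + 4)" shows "P m"
proof (induction m rule: less_induct)
  case (less m)
  show ?case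
  proof (cases "m < 4")
    case False
    then have "m = (m - 4) + 4" by simp
    then show ?thesis using assms(2) less[of "m - 4"] False by (metis add_diff_cancel_right' less_add_same_cancel1 zero_less_numeral)
  qed (rule assms(1))
qed
lemma lt4: "m < (4::nat) \<longleftrightarrow> m = 0 \<or> m = 1 \<or> m = 2 \<or> m = 3" by auto
lemmas gsimps = lt4 g_small g_plus4 g_plus4'
lemma g_pos: "0 < m \<Longrightarrow> 0 < g m" by (induction m rule: ind4) (auto simp: gsimps)
lemma g_le: "g m \<le> m" by (induction m rule: ind4) (auto simp: gsimps)
lemma g_ge: "m div 4 \<le> g m" by (simp add: g_def)
lemma g_le': "g m \<le> m div 4 + 2" by (simp add: g_def)
lemma g_step: "g (Suc m) \<le> g m + 1 \<and> g m \<le> g (Suc m) + 1"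
  by (induction m rule: ind4) (auto simp: gsimps)
lemma g_dvd: "m mod 4 = 0 \<Longrightarrow> g m = m div 4" by (simp add: g_def)
lemma g_le2: "4 \<le> m \<Longrightarrow> g m + 2 \<le> m" using g_le[of "m-4"] g_plus4[of "m-4"] by simp
lemma g_m12: "m mod 4 = 0 \<or> m mod 4 = 1 \<Longrightarrow> g (Suc m) = g m + 1"
  by (induction m rule: ind4) (auto simp: gsimps)
lemma g_m3: "m mod 4 = 3 \<Longrightarrow> g m = g (Suc m) + 1"
  by (induction m rule: ind4) (auto simp: gsimps)


definition GG :: "nat \<Rightarrow> nat \<Rightarrow> nat" where "GG n i = min (g i) (g (n - i))"
definition FU :: "nat \<Rightarrow> nat \<Rightarrow> nat" where "FU n i = min (min i (n - i)) (2 + GG n i)"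
definition FV :: "nat \<Rightarrow> nat \<Rightarrow> nat" where "FV n i = 1 + GG n i"
definition HV :: "nat \<Rightarrow> nat \<Rightarrow> nat" where
  "HV n i = min (2 + GG n i) (min (if i mod 4 = 0 then i div 4 else 2 + GG n i)
      (if (n - i) mod 4 = 0 then (n - i) div 4 else 2 + GG n i))"

lemma GG_step: "Suc i < n \<Longrightarrow> GG n (Suc i) \<le> GG n i + 1 \<and> GG n i \<le> GG n (Suc i) + 1"
  using g_step[of i] g_step[of "n - Suc i"] Suc_diff_Suc[of i n] unfolding GG_def by (simp add: min_def)

lemma FU_step: "Suc i < n \<Longrightarrow> FU n (Suc i) \<le> FU n i + 1 \<and> FU n i \<le> FU n (Suc i) + 1"
proof -
  assume a: "Suc i < n"
  have h: "n - i = Suc (n - Suc i)" using a by simp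
  show ?thesis unfolding FU_def using GG_step[OF a] h by arith
qed

lemma FV_step: "Suc i < n \<Longrightarrow> FV n (Suc i) \<le> FV n i + 1 \<and> FV n i \<le> FV n (Suc i) + 1"
  using GG_step[of i n] unfolding FV_def by simp

lemma GG_4: "i + 4 < n \<Longrightarrow> GG n (i + 4) \<le> GG n i + 1 \<and> GG n i \<le> GG n (i + 4) + 1"
proof -
  assume a: "i + 4 < n"
  then have "n - i = (n - (i + 4)) + 4" by simp
  then have "g (n - i) = g (n - (i+4)) + 1" using g_plus4 by metis
  then show ?thesis using g_plus4[of i] unfolding GG_def by (simp add: min_def)
qed

lemma GG_left: "24 < n \<Longrightarrow> i \<le> 8 \<Longrightarrow> GG n i = g i"
proof -
  assume a: "24 < n" "i \<le> 8"
  have "g i \<le> i div 4 + 2" by (rule g_le')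
  also have "\<dots> \<le> 4" using a by simp
  also have "4 \<le> (n - i) div 4" using a by simp
  also have "\<dots> \<le> g (n - i)" by (rule g_ge)
  finally show ?thesis unfolding GG_def by simp
qed

lemma GG_right: "24 < n \<Longrightarrow> i < n \<Longrightarrow> n - i \<le> 8 \<Longrightarrow> GG n i = g (n - i)"
proof -
  assume a: "24 < n" "i < n" "n - i \<le> 8"
  have "g (n - i) \<le> (n - i) div 4 + 2" by (rule g_le')
  also have "\<dots> \<le> 4" using a by simp
  also have "4 \<le> i div 4" using a by simp
  also have "\<dots> \<le> g i" by (rule g_ge)
  finally show ?thesis unfolding GG_def by simp
qed

lemma GG_wrap: "24 < n \<Longrightarrow> i < n \<Longrightarrow> n \<le> i + 4 \<Longrightarrow>
   GG n (i + 4 - n) \<le> GG n i + 1 \<and> GG n i \<le> GG n (i + 4 - n) + 1"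
proof -
  assume a: "24 < n" "i < n" "n \<le> i + 4"
  then have d: "n - i = 1 \<or> n - i = 2 \<or> n - i = 3 \<or> n - i = 4" by auto
  have e1: "GG n i = g (n - i)" using a by (intro GG_right) auto
  have e2: "GG n (i + 4 - n) = g (4 - (n - i))"
    using GG_left[of n "i + 4 - n"] a by (simp add: add.commute)
  show ?thesis unfolding e1 e2 using d by (auto simp: g_small)
qed

lemma g_le4: "i \<le> 4 \<Longrightarrow> g i \<le> 2"
proof -
  assume "i \<le> 4"
  then have "i = 0 \<or> i = 1 \<or> i = 2 \<or> i = 3 \<or> i = 4" by auto
  then show ?thesis by (auto simp: g_small)
qed

lemma HV_left: "24 < n \<Longrightarrow> i \<le> 4 \<Longrightarrow> HV n i = (if i mod 4 = 0 then min (2 + g i) (i div 4) else 2 + g i)"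
proof -
  assume a: "24 < n" "i \<le> 4"
  have e: "GG n i = g i" using a by (intro GG_left) auto
  have "2 + g i \<le> 4" using g_le4[OF a(2)] by simp
  also have "4 \<le> (n - i) div 4" using a by simp
  finally show ?thesis unfolding HV_def e by (auto simp: min_def)
qed

lemma HV_right: "24 < n \<Longrightarrow> i < n \<Longrightarrow> n - i \<le> 4 \<Longrightarrow> HV n i = (if (n - i) mod 4 = 0 then min (2 + g (n - i)) ((n - i) div 4) else 2 + g (n - i))"
proof -
  assume a: "24 < n" "i < n" "n - i \<le> 4"
  have e: "GG n i = g (n - i)" using a by (intro GG_right) auto
  have "2 + g (n - i) \<le> 4" using g_le4[OF a(3)] by simp
  also have "4 \<le> i div 4" using a by simp
  finally show ?thesis unfolding HV_def e by (auto simp: min_def)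
qed

lemma min_lip: "(x::nat) \<le> x' + 1 \<Longrightarrow> y \<le> y' + 1 \<Longrightarrow> min x y \<le> min x' y' + 1"
  by (simp add: min_def)

lemma HV_4: "i + 4 < n \<Longrightarrow> HV n (i + 4) \<le> HV n i + 1 \<and> HV n i \<le> HV n (i + 4) + 1"
proof -
  assume a: "i + 4 < n"
  have h: "n - i = (n - (i + 4)) + 4" using a by simp
  have m1: "(n - i) mod 4 = (n - (i + 4)) mod 4" "(n - i) div 4 = (n - (i + 4)) div 4 + 1"
    by (subst h, simp)+
  have m2: "(i + 4) mod 4 = i mod 4" "(i + 4) div 4 = i div 4 + 1" by simp_all
  have G: "GG n (i + 4) \<le> GG n i + 1" "GG n i \<le> GG n (i + 4) + 1" using GG_4[OF a] by auto
  have t1: "(if (i+4) mod 4 = 0 then (i+4) div 4 else 2 + GG n (i+4)) \<le> (if i mod 4 = 0 then i div 4 else 2 + GG n i) + 1"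
    "(if i mod 4 = 0 then i div 4 else 2 + GG n i) \<le> (if (i+4) mod 4 = 0 then (i+4) div 4 else 2 + GG n (i+4)) + 1"
    using G m2 by auto
  have t2: "(if (n-(i+4)) mod 4 = 0 then (n-(i+4)) div 4 else 2 + GG n (i+4)) \<le> (if (n-i) mod 4 = 0 then (n-i) div 4 else 2 + GG n i) + 1"
    "(if (n-i) mod 4 = 0 then (n-i) div 4 else 2 + GG n i) \<le> (if (n-(i+4)) mod 4 = 0 then (n-(i+4)) div 4 else 2 + GG n (i+4)) + 1"
    using G m1 by auto
  show ?thesis unfolding HV_def using G t1 t2 by (intro conjI min_lip) auto
qed

lemma HV_wrap: "24 < n \<Longrightarrow> i < n \<Longrightarrow> n \<le> i + 4 \<Longrightarrow>
   HV n (i + 4 - n) \<le> HV n i + 1 \<and> HV n i \<le> HV n (i + 4 - n) + 1"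
proof -
  assume a: "24 < n" "i < n" "n \<le> i + 4"
  define d where "d = n - i"
  have j: "i + 4 - n = 4 - d" using a unfolding d_def by simp
  have d: "d = 1 \<or> d = 2 \<or> d = 3 \<or> d = 4" using a unfolding d_def by auto
  have e1: "HV n i = (if d mod 4 = 0 then min (2 + g d) (d div 4) else 2 + g d)"
    using a HV_right[of n i] unfolding d_def by auto
  have e2: "HV n (4 - d) = (if (4 - d) mod 4 = 0 then min (2 + g (4 - d)) ((4 - d) div 4) else 2 + g (4 - d))"
    using a HV_left[of n "4 - d"] by auto
  show ?thesis unfolding j e1 e2 using d by (auto simp: g_small)
qed

lemma mod1: "i < n \<Longrightarrow> (i + 1) mod n = (if Suc i < n then Suc i else 0)"
  by (cases "Suc i = n") auto

lemma mod4: fixes i n :: nat shows "i < n \<Longrightarrow> 4 \<le> n \<Longrightarrow> (i + 4) mod n = (if i + 4 < n then i + 4 else i + 4 - n)"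
proof -
  assume a: "i < n" "4 \<le> n"
  show ?thesis
  proof (cases "i + 4 < n")
    case False
    then have "i + 4 = (i + 4 - n) + n" "i + 4 - n < n" using a by auto
    then show ?thesis using False by (metis mod_add_self2 mod_less)
  qed simp
qed

lemma lip_gen:
  fixes Ra Rb :: "nat \<Rightarrow> nat"
  assumes n: "24 < n"
    and o1: "\<And>i. Suc i < n \<Longrightarrow> Ra (Suc i) \<le> Ra i + 1 \<and> Ra i \<le> Ra (Suc i) + 1"
    and o2: "Ra (n - 1) \<le> Ra 0 + 1 \<and> Ra 0 \<le> Ra (n - 1) + 1"
    and i1: "\<And>i. i + 4 < n \<Longrightarrow> Rb (i + 4) \<le> Rb i + 1 \<and> Rb i \<le> Rb (i + 4) + 1"
    and i2: "\<And>i. i < n \<Longrightarrow> n \<le> i + 4 \<Longrightarrow> Rb (i + 4 - n) \<le> Rb i + 1 \<and> Rb i \<le> Rb (i + 4 - n) + 1"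
    and s: "\<And>i. i < n \<Longrightarrow> Ra i \<le> Rb i + 1 \<and> Rb i \<le> Ra i + 1"
    and adj: "gp_adj n 4 a b"
  shows "(if fst a then Rb (snd a) else Ra (snd a)) \<le> (if fst b then Rb (snd b) else Ra (snd b)) + 1"
proof -
  obtain b1 i b2 j where ab: "a = (b1, i)" "b = (b2, j)" by (cases a, cases b) auto
  have n4: "4 \<le> n" using n by simp
  have out: "Ra x \<le> Ra y + 1" if "x < n" "y < n" "y = (x + 1) mod n \<or> x = (y + 1) mod n" for x y
  proof -
    from that(3) show ?thesis
    proof
      assume "y = (x + 1) mod n"
      then show ?thesis using mod1[OF that(1)] o1[of x] o2 that(1)
        by (cases "Suc x = n") (auto simp: diff_Suc_1[symmetric] simp del: diff_Suc_1)
    next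
      assume "x = (y + 1) mod n"
      then show ?thesis using mod1[OF that(2)] o1[of y] o2 that(2)
        by (cases "Suc y = n") (auto simp: diff_Suc_1[symmetric] simp del: diff_Suc_1)
    qed
  qed
  have inn: "Rb x \<le> Rb y + 1" if "x < n" "y < n" "y = (x + 4) mod n \<or> x = (y + 4) mod n" for x y
  proof -
    from that(3) show ?thesis
    proof
      assume "y = (x + 4) mod n"
      then show ?thesis using mod4[OF that(1) n4] i1[of x] i2[of x] that(1) by (auto split: if_splits)
    next
      assume "x = (y + 4) mod n"
      then show ?thesis using mod4[OF that(2) n4] i1[of y] i2[of y] that(2) by (auto split: if_splits)
    qed
  qed
  show ?thesis using adj unfolding ab adj_iff using out inn s by auto
qed

definition fx :: "nat \<Rightarrow> bool \<times> nat \<Rightarrow> nat" where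
  "fx n w = (if fst w then FV n (snd w) else FU n (snd w))"
definition hh :: "nat \<Rightarrow> bool \<times> nat \<Rightarrow> nat" where
  "hh n w = (if fst w then HV n (snd w) else FV n (snd w))"

lemma GG_le: "i < n \<Longrightarrow> GG n i \<le> i \<and> GG n i \<le> n - i"
  unfolding GG_def using g_le[of i] g_le[of "n - i"] by auto

lemma GG_HV: "GG n i \<le> HV n i \<and> HV n i \<le> GG n i + 2"
proof -
  have "i mod 4 = 0 \<Longrightarrow> GG n i \<le> i div 4" unfolding GG_def using g_dvd[of i] by simp
  moreover have "(n - i) mod 4 = 0 \<Longrightarrow> GG n i \<le> (n - i) div 4" unfolding GG_def using g_dvd[of "n - i"] by simp
  ultimately show ?thesis unfolding HV_def by auto
qed

lemma FU_0: "FU n 0 = 0" by (simp add: FU_def)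
lemma FU_n1: "24 < n \<Longrightarrow> FU n (n - 1) = 1" by (simp add: FU_def)
lemma FV_0: "FV n 0 = 1" by (simp add: FV_def GG_def g_small)
lemma FV_n1: "24 < n \<Longrightarrow> FV n (n - 1) = 2" using GG_right[of n "n - 1"] by (simp add: FV_def g_small)

lemma fx_lip: "24 < n \<Longrightarrow> gp_adj n 4 a b \<Longrightarrow> fx n a \<le> fx n b + 1"
  unfolding fx_def
proof (rule lip_gen[where Ra = "FU n" and Rb = "FV n"])
  assume n: "24 < n"
  show "FU n (n - 1) \<le> FU n 0 + 1 \<and> FU n 0 \<le> FU n (n - 1) + 1" using FU_n1[OF n] FU_0[of n] by simp
  show "\<And>i. i < n \<Longrightarrow> FU n i \<le> FV n i + 1 \<and> FV n i \<le> FU n i + 1"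
    using GG_le unfolding FU_def FV_def by fastforce
  show "\<And>i. i < n \<Longrightarrow> n \<le> i + 4 \<Longrightarrow> FV n (i + 4 - n) \<le> FV n i + 1 \<and> FV n i \<le> FV n (i + 4 - n) + 1"
    using GG_wrap[OF n] unfolding FV_def by auto
  show "\<And>i. i + 4 < n \<Longrightarrow> FV n (i + 4) \<le> FV n i + 1 \<and> FV n i \<le> FV n (i + 4) + 1"
    using GG_4 unfolding FV_def by auto
qed (assumption | metis FU_step)+

lemma hh_lip: "24 < n \<Longrightarrow> gp_adj n 4 a b \<Longrightarrow> hh n a \<le> hh n b + 1"
  unfolding hh_def
proof (rule lip_gen[where Ra = "FV n" and Rb = "HV n"])
  assume n: "24 < n"
  show "FV n (n - 1) \<le> FV n 0 + 1 \<and> FV n 0 \<le> FV n (n - 1) + 1" using FV_n1[OF n] FV_0[of n] by simp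
  show "\<And>i. i < n \<Longrightarrow> FV n i \<le> HV n i + 1 \<and> HV n i \<le> FV n i + 1"
    using GG_HV unfolding FV_def by fastforce
  show "\<And>i. i < n \<Longrightarrow> n \<le> i + 4 \<Longrightarrow> HV n (i + 4 - n) \<le> HV n i + 1 \<and> HV n i \<le> HV n (i + 4 - n) + 1"
    using HV_wrap[OF n] by auto
  show "\<And>i. i + 4 < n \<Longrightarrow> HV n (i + 4) \<le> HV n i + 1 \<and> HV n i \<le> HV n (i + 4) + 1"
    using HV_4 by auto
qed (assumption | metis FV_step)+


lemma adjI_out1: "0 < i \<Longrightarrow> i < n \<Longrightarrow> gp_adj n k (False, i) (False, i - 1)"
  unfolding adj_iff by auto
lemma adjI_out2: "i < n \<Longrightarrow> gp_adj n k (False, i) (False, (i + 1) mod n)"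
  unfolding adj_iff using mod_less_divisor[of n "i+1"] by auto
lemma adjI_sp: "i < n \<Longrightarrow> gp_adj n k (b, i) (\<not> b, i)"
  unfolding adj_iff by auto
lemma adjI_in1: "i < n \<Longrightarrow> 0 < n \<Longrightarrow> gp_adj n k (True, i) (True, (i + k) mod n)"
  unfolding adj_iff by auto
lemma adjI_in2: "j < n \<Longrightarrow> i = (j + k) mod n \<Longrightarrow> gp_adj n k (True, i) (True, j)"
  unfolding adj_iff by auto

lemma FU_pos: "0 < i \<Longrightarrow> i < n \<Longrightarrow> 0 < FU n i" by (simp add: FU_def)

lemma FU_le: "FU n i \<le> i" "FU n i \<le> n - i" "FU n i \<le> 2 + GG n i" by (simp_all add: FU_def)

lemma fx_desc:
  assumes n: "24 < n" and w: "w \<in> gp_verts n" "w \<noteq> (False, 0)"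
  shows "\<exists>w'\<in>gp_verts n. gp_adj n 4 w w' \<and> fx n w' < fx n w"
proof -
  obtain b i where wi: "w = (b, i)" by (cases w)
  have i: "i < n" using w wi by (simp add: gp_verts_def)
  show ?thesis
  proof (cases b)
    case False
    then have i0: "0 < i" using w wi by auto
    have c1: "fx n (False, i - 1) < i" using FU_le(1)[of n "i - 1"] i0 by (simp add: fx_def)
    have c2: "fx n (False, (i + 1) mod n) < n - i"
    proof (cases "Suc i < n")
      case True
      then show ?thesis using FU_le(2)[of n "Suc i"] by (simp add: fx_def)
    next
      case False
      then have "Suc i = n" using i by simp
      then show ?thesis by (simp add: fx_def FU_0)
    qed
    have c3: "fx n (True, i) < 2 + GG n i" by (simp add: fx_def FV_def)
    have "fx n w = min (min i (n - i)) (2 + GG n i)" using False wi by (simp add: fx_def FU_def)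
    then have "fx n (False, i - 1) < fx n w \<or> fx n (False, (i + 1) mod n) < fx n w \<or> fx n (True, i) < fx n w"
      using c1 c2 c3 by linarith
    moreover have "(False, i - 1) \<in> gp_verts n" "(False, (i + 1) mod n) \<in> gp_verts n" "(True, i) \<in> gp_verts n"
      using i n by (auto simp: gp_verts_def)
    moreover have "gp_adj n 4 w (False, i - 1)" "gp_adj n 4 w (False, (i + 1) mod n)" "gp_adj n 4 w (True, i)"
      using wi False adjI_out1[OF i0 i] adjI_out2[OF i] adjI_sp[OF i, of 4 False] by auto
    ultimately show ?thesis by blast
  next
    case True
    have fw: "fx n w = 1 + GG n i" using True wi by (simp add: fx_def FV_def)
    have wT: "w = (True, i)" using True wi by simp
    have pick: "\<exists>w'\<in>gp_verts n. gp_adj n 4 w w' \<and> fx n w' < fx n w"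
      if "j < n" "gp_adj n 4 (True, i) (c, j)" "fx n (c, j) < fx n w" for c j
      using that wT by (auto simp: gp_verts_def)
    show ?thesis
    proof (cases "i = 0")
      case True
      show ?thesis
        by (rule pick[of 0 False]) (use n True fw adjI_sp[of 0 n 4 True] in \<open>simp_all add: fx_def FU_0\<close>)
    next
      case False
      have "GG n i = g i \<or> GG n i = g (n - i)" unfolding GG_def by (simp add: min_def)
      then show ?thesis
      proof
        assume G: "GG n i = g i"
        show ?thesis
        proof (cases "i \<le> 2")
          case True
          then have "i = 1 \<or> i = 2" using False by auto
          then have "fx n (False, i) < fx n w" using FU_le(1)[of n i] fw G by (auto simp: fx_def g_small)
          then show ?thesis by (rule pick[OF i adjI_sp[OF i, of 4 True, simplified]])
        next
          case i3: False
          define j where "j = (if i = 3 then n - 1 else i - 4)"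
          have j: "j < n" "i = (j + 4) mod n" using i i3 n by (auto simp: j_def)
          have "FV n j \<le> g i"
          proof (cases "i = 3")
            case True
            then show ?thesis using FV_n1[OF n] by (simp add: j_def g_small)
          next
            case False
            then have "i - 4 + 4 = i" using i3 by simp
            then have "g i = g (i - 4) + 1" using g_plus4[of "i - 4"] by simp
            then show ?thesis using False by (simp add: j_def FV_def GG_def)
          qed
          then have "fx n (True, j) < fx n w" using fw G by (simp add: fx_def)
          then show ?thesis by (rule pick[OF j(1) adjI_in2[OF j]])
        qed
      next
        assume G: "GG n i = g (n - i)"
        show ?thesis
        proof (cases "n - i \<le> 2")
          case True
          then have "n - i = 1 \<or> n - i = 2" using i by auto
          then have "fx n (False, i) < fx n w" using FU_le(2)[of n i] fw G by (auto simp: fx_def g_small)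
          then show ?thesis by (rule pick[OF i adjI_sp[OF i, of 4 True, simplified]])
        next
          case i3: False
          define j where "j = (i + 4) mod n"
          have j: "j < n" using n by (simp add: j_def)
          have "FV n j \<le> g (n - i)"
          proof (cases "n - i = 3")
            case True
            have e: "i + 4 = 1 + n" using True i by simp
            have "j = 1" unfolding j_def e using n by (simp only: mod_add_self2) simp
            then show ?thesis using True GG_left[OF n, of 1] by (simp add: FV_def g_small)
          next
            case False
            then have "i + 4 \<le> n" using i3 by simp
            show ?thesis
            proof (cases "i + 4 = n")
              case True
              then have "j = 0" by (simp add: j_def)
              moreover have "n - i = 4" using True by simp
              ultimately show ?thesis by (simp add: FV_0 g_small)
            next
              case False
              then have "j = i + 4" using \<open>i + 4 \<le> n\<close> by (simp add: j_def)
              then have eq: "n - i = (n - j) + 4" using \<open>i + 4 \<le> n\<close> by simp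
              have "g (n - i) = g (n - j) + 1" by (simp only: eq g_plus4)
              moreover have "FV n j \<le> 1 + g (n - j)" by (simp add: FV_def GG_def)
              ultimately show ?thesis by linarith
            qed
          qed
          then have "fx n (True, j) < fx n w" using fw G by (simp add: fx_def)
          moreover have "gp_adj n 4 (True, i) (True, j)" unfolding j_def by (rule adjI_in1[OF i]) (use n in simp)
          ultimately show ?thesis using pick[OF j] by blast
        qed
      qed
    qed
  qed
qed

lemma HV_0: "HV n 0 = 0" by (simp add: HV_def)

lemma mod4_pred: fixes k :: nat shows "0 < k \<Longrightarrow> k mod 4 = 1 \<or> k mod 4 = 2 \<Longrightarrow> (k - 1) mod 4 = 0 \<or> (k - 1) mod 4 = 1"
  by (cases k) (auto simp: mod_Suc split: if_splits)

lemma hh_desc: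
  assumes n: "24 < n" and w: "w \<in> gp_verts n" "w \<noteq> (True, 0)"
  shows "\<exists>w'\<in>gp_verts n. gp_adj n 4 w w' \<and> hh n w' < hh n w"
proof -
  obtain b i where wi: "w = (b, i)" by (cases w)
  have i: "i < n" using w wi by (simp add: gp_verts_def)
  have pick: "\<exists>w'\<in>gp_verts n. gp_adj n 4 w w' \<and> hh n w' < hh n w"
    if "j < n" "gp_adj n 4 (b, i) (c, j)" "hh n (c, j) < hh n w" for c j
    using that wi by (auto simp: gp_verts_def)
  have FV_GG: "FV n j \<le> 1 + g j" "FV n j \<le> 1 + g (n - j)" for j by (simp_all add: FV_def GG_def)
  show ?thesis
  proof (cases b)
    case False
    have fw: "hh n w = 1 + GG n i" using False wi by (simp add: hh_def FV_def)
    have sp: "gp_adj n 4 (b, i) (True, i)" using adjI_sp[OF i, of 4 False] False by simp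
    have o1: "0 < i \<Longrightarrow> gp_adj n 4 (b, i) (False, i - 1)" using adjI_out1[OF _ i] False by simp
    have o2: "gp_adj n 4 (b, i) (False, (i + 1) mod n)" using adjI_out2[OF i] False by simp
    have j1: "i - 1 < n" "(i + 1) mod n < n" using i n by auto
    show ?thesis
    proof (cases "i = 0")
      case True
      show ?thesis by (rule pick[of 0 True]) (use n True fw sp in \<open>simp_all add: hh_def HV_0\<close>)
    next
      case i0: False
      have "GG n i = g i \<or> GG n i = g (n - i)" unfolding GG_def by (simp add: min_def)
      then show ?thesis
      proof
        assume G: "GG n i = g i"
        have "i mod 4 = 0 \<or> i mod 4 = 1 \<or> i mod 4 = 2 \<or> i mod 4 = 3" by auto
        then consider "i mod 4 = 0" | "i mod 4 = 1 \<or> i mod 4 = 2" | "i mod 4 = 3" by metis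
        then show ?thesis
        proof cases
          case 1
          have "HV n i \<le> g i" using g_dvd[OF 1] 1 unfolding HV_def by (simp add: min_le_iff_disj)
          then show ?thesis using fw G by (intro pick[OF i sp]) (simp add: hh_def)
        next
          case 2
          then have "(i - 1) mod 4 = 0 \<or> (i - 1) mod 4 = 1" using i0 mod4_pred[of i] by simp
          then have "g (Suc (i - 1)) = g (i - 1) + 1" by (rule g_m12)
          then have "g i = g (i - 1) + 1" using i0 by simp
          then show ?thesis using fw G FV_GG(1)[of "i - 1"] by (intro pick[OF j1(1) o1[OF _]]) (use i0 in \<open>simp_all add: hh_def\<close>)
        next
          case 3
          have "hh n (False, (i + 1) mod n) < hh n w"
          proof (cases "Suc i < n")
            case True
            then have "(i + 1) mod n = Suc i" by simp
            then show ?thesis using fw G FV_GG(1)[of "Suc i"] g_m3[OF 3] by (simp add: hh_def)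
          next
            case False
            then have "Suc i = n" using i by simp
            then have "(i + 1) mod n = 0" by simp
            then show ?thesis using fw G g_pos[of i] i0 by (simp add: hh_def FV_0)
          qed
          then show ?thesis by (rule pick[OF j1(2) o2])
        qed
      next
        assume G: "GG n i = g (n - i)"
        define m where "m = n - i"
        have m0: "0 < m" using i by (simp add: m_def)
        have "m mod 4 = 0 \<or> m mod 4 = 1 \<or> m mod 4 = 2 \<or> m mod 4 = 3" by auto
        then consider "m mod 4 = 0" | "m mod 4 = 1 \<or> m mod 4 = 2" | "m mod 4 = 3" by metis
        then show ?thesis
        proof cases
          case 1
          have "HV n i \<le> g m" using g_dvd[OF 1] 1 unfolding HV_def m_def by (simp add: min_le_iff_disj)
          then show ?thesis using fw G by (intro pick[OF i sp]) (simp add: hh_def m_def)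
        next
          case 2
          have "hh n (False, (i + 1) mod n) < hh n w"
          proof (cases "Suc i < n")
            case True
            then have e: "(i + 1) mod n = Suc i" by simp
            have "(m - 1) mod 4 = 0 \<or> (m - 1) mod 4 = 1" using 2 m0 mod4_pred[of m] by simp
            then have "g (Suc (m - 1)) = g (m - 1) + 1" by (rule g_m12)
            moreover have "Suc (m - 1) = m" "m - 1 = n - Suc i" using m0 by (auto simp: m_def)
            ultimately have "g m = g (n - Suc i) + 1" by simp
            then show ?thesis using e fw G FV_GG(2)[of "Suc i"] by (simp add: hh_def m_def)
          next
            case False
            then have "Suc i = n" using i by simp
            then have "(i + 1) mod n = 0" by simp
            then show ?thesis using fw G g_pos[of m] m0 by (simp add: hh_def FV_0 m_def)
          qed
          then show ?thesis by (rule pick[OF j1(2) o2])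
        next
          case 3
          have e: "n - (i - 1) = Suc m" using i0 i by (simp add: m_def)
          have "g m = g (Suc m) + 1" by (rule g_m3[OF 3])
          then have "hh n (False, i - 1) < hh n w" using fw G FV_GG(2)[of "i - 1"] e by (simp add: hh_def m_def)
          then show ?thesis using i0 by (intro pick[OF j1(1) o1]) simp_all
        qed
      qed
    qed
  next
    case True
    have fw: "hh n w = HV n i" using True wi by (simp add: hh_def)
    have i0: "i \<noteq> 0" using True wi w by auto
    have "HV n i = 2 + GG n i \<or> (i mod 4 = 0 \<and> HV n i = i div 4) \<or> ((n - i) mod 4 = 0 \<and> HV n i = (n - i) div 4)"
      unfolding HV_def by (simp add: min_def)
    then consider "HV n i = 2 + GG n i" | "i mod 4 = 0" "HV n i = i div 4" | "(n - i) mod 4 = 0" "HV n i = (n - i) div 4"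
      by metis
    then show ?thesis
    proof cases
      case 1
      have a: "gp_adj n 4 (b, i) (False, i)" using adjI_sp[OF i, of 4 True] True by simp
      have "hh n (False, i) < hh n w" using fw 1 by (simp add: hh_def FV_def)
      then show ?thesis by (rule pick[OF i a])
    next
      case 2
      have i4: "4 \<le> i" "(i - 4) mod 4 = 0" "(i - 4) div 4 = i div 4 - 1" using i0 2(1) by presburger+
      have j: "i - 4 < n" using i by simp
      have "gp_adj n 4 (b, i) (True, i - 4)" using True adjI_in2[OF j, of i 4] i i4 by simp
      moreover have "HV n (i - 4) \<le> (i - 4) div 4" using i4 unfolding HV_def by (simp add: min_le_iff_disj)
      moreover have "0 < i div 4" using i4(1) by simp
      ultimately have "hh n (True, i - 4) < hh n w" using fw 2 i4 by (simp add: hh_def, linarith)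
      then show ?thesis by (rule pick[OF j \<open>gp_adj n 4 (b, i) (True, i - 4)\<close>])
    next
      case 3
      have m4: "4 \<le> n - i" using 3(1) i by presburger
      have a: "gp_adj n 4 (b, i) (True, (i + 4) mod n)" using adjI_in1[OF i] n True by simp
      have "hh n (True, (i + 4) mod n) < hh n w"
      proof (cases "i + 4 < n")
        case True
        then have e: "(i + 4) mod n = i + 4" by simp
        have "(n - (i + 4)) mod 4 = 0" "(n - (i + 4)) div 4 = (n - i) div 4 - 1" using 3(1) m4 by presburger+
        then have "HV n (i + 4) \<le> (n - i) div 4 - 1" unfolding HV_def by (simp add: min_le_iff_disj)
        moreover have "0 < (n - i) div 4" using m4 by simp
        moreover have "hh n (True, (i + 4) mod n) = HV n (i + 4)" unfolding e by (simp add: hh_def)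
        moreover have "hh n w = (n - i) div 4" using fw 3(2) by simp
        ultimately show ?thesis by linarith
      next
        case False
        then have "i + 4 = n" using m4 by simp
        then have "(i + 4) mod n = 0" by simp
        then show ?thesis using fw 3 m4 by (simp add: hh_def HV_0)
      qed
      then show ?thesis using n by (intro pick[OF _ a]) simp_all
    qed
  qed
qed



lemma rot_inv2: "4 \<le> n \<Longrightarrow> w \<in> gp_verts n \<Longrightarrow> rot n (n - 4) (rot n 4 w) = w"
proof -
  assume a: "4 \<le> n" "w \<in> gp_verts n"
  obtain b i where w: "w = (b, i)" by (cases w)
  have i: "i < n" using a w by (simp add: gp_verts_def)
  have "((i + 4) mod n + (n - 4)) mod n = (i + 4 + (n - 4)) mod n" by (simp add: mod_add_left_eq)
  also have "i + 4 + (n - 4) = i + n" using a by simp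
  finally show ?thesis using i w by (simp add: rot_def)
qed

definition fy :: "nat \<Rightarrow> bool \<times> nat \<Rightarrow> nat" where "fy n w = hh n (rot n (n - 4) w)"

lemma dist_x: assumes n: "24 < n" and w: "w \<in> gp_verts n"
  shows "gdist (gp_verts n) (gp_adj n 4) w (False, 0) = fx n w"
proof (rule gdist_eq[where f = "fx n"])
  show "(False, 0) \<in> gp_verts n" using n by (simp add: gp_verts_def)
  show "fx n (False, 0) = 0" by (simp add: fx_def FU_0)
  show "\<And>a b. a \<in> gp_verts n \<Longrightarrow> b \<in> gp_verts n \<Longrightarrow> gp_adj n 4 a b \<Longrightarrow> fx n a \<le> fx n b + 1"
    using fx_lip[OF n] by blast
  show "\<And>w. w \<in> gp_verts n \<Longrightarrow> w \<noteq> (False, 0) \<Longrightarrow> \<exists>w'\<in>gp_verts n. gp_adj n 4 w w' \<and> fx n w' < fx n w"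
    using fx_desc[OF n] by blast
qed (rule w)

lemma dist_y: assumes n: "24 < n" and w: "w \<in> gp_verts n"
  shows "gdist (gp_verts n) (gp_adj n 4) w (True, 4) = fy n w"
proof (rule gdist_eq[where f = "fy n"])
  have n0: "0 < n" "4 \<le> n" using n by auto
  show "(True, 4) \<in> gp_verts n" using n by (simp add: gp_verts_def)
  have "(4 + (n - 4)) mod n = 0" using n by simp
  then show "fy n (True, 4) = 0" by (simp add: fy_def rot_def hh_def HV_0)
  show "\<And>a b. a \<in> gp_verts n \<Longrightarrow> b \<in> gp_verts n \<Longrightarrow> gp_adj n 4 a b \<Longrightarrow> fy n a \<le> fy n b + 1"
    unfolding fy_def using hh_lip[OF n] adj_rot[OF n0(1)] by blast
  show "\<exists>w'\<in>gp_verts n. gp_adj n 4 v w' \<and> fy n w' < fy n v"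
    if v: "v \<in> gp_verts n" "v \<noteq> (True, 4)" for v
  proof -
    have rv: "rot n (n - 4) v \<in> gp_verts n" by (rule rot_V[OF n0(1)])
    have "rot n (n - 4) v \<noteq> (True, 0)"
    proof
      assume "rot n (n - 4) v = (True, 0)"
      then have "rot n 4 (rot n (n - 4) v) = (True, 4 mod n)" by (simp add: rot_def)
      then show False using rot_inv[OF n0(2) v(1)] v(2) n by simp
    qed
    then obtain z where z: "z \<in> gp_verts n" "gp_adj n 4 (rot n (n - 4) v) z" "hh n z < hh n (rot n (n - 4) v)"
      using hh_desc[OF n rv] by blast
    have "gp_adj n 4 (rot n 4 (rot n (n - 4) v)) (rot n 4 z)" by (rule adj_rot[OF n0(1) z(2)])
    then have a: "gp_adj n 4 v (rot n 4 z)" using rot_inv[OF n0(2) v(1)] by simp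
    have "fy n (rot n 4 z) = hh n z" unfolding fy_def using rot_inv2[OF n0(2) z(1)] by simp
    moreover have "rot n 4 z \<in> gp_verts n" by (rule rot_V[OF n0(1)])
    ultimately show ?thesis using a z(3) unfolding fy_def by (intro bexI[of _ "rot n 4 z"]) auto
  qed
qed (rule w)

definition cmp :: "nat \<Rightarrow> nat \<Rightarrow> int" where
  "cmp x y = (if x < y then 1 else if y < x then -1 else 0)"
definition cc :: "nat \<Rightarrow> nat \<Rightarrow> int" where
  "cc n i = cmp (FU n i) (FV n ((i + (n - 4)) mod n)) + cmp (FV n i) (HV n ((i + (n - 4)) mod n))"

lemma card_split: "card {w \<in> gp_verts n. P w} = card {i \<in> {..<n}. P (False, i)} + card {i \<in> {..<n}. P (True, i)}"
proof -
  have e: "{w \<in> gp_verts n. P w} = Pair False ` {i \<in> {..<n}. P (False, i)} \<union> Pair True ` {i \<in> {..<n}. P (True, i)}"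
  proof (rule set_eqI)
    fix w :: "bool \<times> nat"
    obtain b i where w: "w = (b, i)" by (cases w)
    show "w \<in> {w \<in> gp_verts n. P w} \<longleftrightarrow> w \<in> Pair False ` {i \<in> {..<n}. P (False, i)} \<union> Pair True ` {i \<in> {..<n}. P (True, i)}"
      unfolding w by (cases b) (auto simp: gp_verts_def)
  qed
  show ?thesis unfolding e
    by (subst card_Un_disjoint) (auto simp: card_image inj_on_def)
qed

lemma card_sum: fixes n :: nat shows "card {i \<in> {..<n}. Q i} = (\<Sum>i<n. if Q i then 1 else 0)"
proof -
  have "card {i \<in> {..<n}. Q i} = (\<Sum>i\<in>{i \<in> {..<n}. Q i}. 1)" by (rule card_eq_sum)
  also have "\<dots> = (\<Sum>i<n. if Q i then 1 else 0)" by (rule sum.inter_filter) simp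
  finally show ?thesis .
qed

lemma int_if: "int (if P then 1 else 0) = (if P then 1 else 0)" by simp

lemma sum_rearr:
  fixes p1 p2 q1 q2 :: "nat \<Rightarrow> bool" and n :: nat
  shows "int (card {i\<in>{..<n}. p1 i} + card {i\<in>{..<n}. p2 i}) - int (card {i\<in>{..<n}. q1 i} + card {i\<in>{..<n}. q2 i})
    = (\<Sum>i<n. ((if p1 i then 1 else 0) + (if p2 i then 1 else 0)) - ((if q1 i then 1 else 0) + (if q2 i then 1 else 0)) :: int)"
  unfolding card_sum by (simp add: sum_subtractf sum.distrib of_nat_sum int_if)

lemma cmp_alt: "cmp x y = (if x < y then 1 else 0) - (if y < x then 1 else 0)"
  by (simp add: cmp_def)

lemma W_eq:
  assumes n: "24 < n"
  shows "W_set (gp_verts n) (gp_adj n 4) (False, 0) (True, 4) = {w \<in> gp_verts n. fx n w < fy n w}"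
    "W_set (gp_verts n) (gp_adj n 4) (True, 4) (False, 0) = {w \<in> gp_verts n. fy n w < fx n w}"
proof -
  have e: "\<And>w. w \<in> gp_verts n \<Longrightarrow> gdist (gp_verts n) (gp_adj n 4) w (False, 0) = fx n w \<and> gdist (gp_verts n) (gp_adj n 4) w (True, 4) = fy n w"
    using dist_x[OF n] dist_y[OF n] by blast
  show "W_set (gp_verts n) (gp_adj n 4) (False, 0) (True, 4) = {w \<in> gp_verts n. fx n w < fy n w}"
    "W_set (gp_verts n) (gp_adj n 4) (True, 4) (False, 0) = {w \<in> gp_verts n. fy n w < fx n w}"
    unfolding W_set_def by (auto dest: e)
qed

lemma diff_sum:
  assumes n: "24 < n"
  shows "int (card (W_set (gp_verts n) (gp_adj n 4) (False, 0) (True, 4))) -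
         int (card (W_set (gp_verts n) (gp_adj n 4) (True, 4) (False, 0))) = (\<Sum>i<n. cc n i)"
proof -
  have ii: "\<And>P. int (if P then 1 else 0) = (if P then 1 else 0)" by simp
  have fyF: "fy n (False, i) = FV n ((i + (n - 4)) mod n)" and fyT: "fy n (True, i) = HV n ((i + (n - 4)) mod n)" for i
    by (simp_all add: fy_def hh_def rot_def)
  have c: "cc n i = ((if fx n (False, i) < fy n (False, i) then 1 else 0) + (if fx n (True, i) < fy n (True, i) then 1 else 0))
       - ((if fy n (False, i) < fx n (False, i) then 1 else 0) + (if fy n (True, i) < fx n (True, i) then 1 else 0))" for i
    unfolding cc_def cmp_alt fyF fyT fx_def fst_conv snd_conv if_True if_False by simp
  show ?thesis unfolding W_eq[OF n] card_split
    by (subst sum_rearr) (rule sum.cong[OF refl], rule c[symmetric])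
qed

definition Pab :: "nat \<Rightarrow> nat \<Rightarrow> bool \<Rightarrow> bool \<Rightarrow> int" where
  "Pab a b fi fn = cmp (2 + min a b) (1 + min (a - 1) (b + 1))
     + cmp (1 + min a b) (min (2 + min (a - 1) (b + 1)) (min (if fi then a - 1 else 2 + min (a - 1) (b + 1)) (if fn then b + 1 else 2 + min (a - 1) (b + 1))))
     + cmp (2 + min b a) (1 + min (b - 1) (a + 1))
     + cmp (1 + min b a) (min (2 + min (b - 1) (a + 1)) (min (if fn then b - 1 else 2 + min (b - 1) (a + 1)) (if fi then a + 1 else 2 + min (b - 1) (a + 1))))"

lemma Pab_bound:
  assumes "1 \<le> a" "1 \<le> b"
  shows "Pab a b fi fn \<le> 0 \<and> (fi \<longrightarrow> a + 2 \<le> b \<longrightarrow> Pab a b fi fn \<le> -2)"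
proof -
  consider "a + 2 \<le> b" | "a + 1 = b" | "a = b" | "b + 1 = a" | "b + 2 \<le> a" by linarith
  then show ?thesis
  proof cases
    case 1
    then have e: "min a b = a" "min b a = a" "min (a - 1) (b + 1) = a - 1" "min (b - 1) (a + 1) = a + 1" using assms by auto
    show ?thesis using 1 assms unfolding Pab_def e by (cases fi; cases fn) (auto simp: cmp_def min_def)
  next
    case 2
    then have e: "min a b = a" "min b a = a" "min (a - 1) (b + 1) = a - 1" "min (b - 1) (a + 1) = a" using assms by auto
    show ?thesis using 2 assms unfolding Pab_def e by (cases fi; cases fn) (auto simp: cmp_def min_def)
  next
    case 3
    then have e: "min a b = a" "min b a = a" "min (a - 1) (b + 1) = a - 1" "min (b - 1) (a + 1) = a - 1" using assms by auto
    show ?thesis using 3 assms unfolding Pab_def e by (cases fi; cases fn) (auto simp: cmp_def min_def)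
  next
    case 4
    then have e: "min a b = b" "min b a = b" "min (a - 1) (b + 1) = b" "min (b - 1) (a + 1) = b - 1" using assms by auto
    show ?thesis using 4 assms unfolding Pab_def e by (cases fi; cases fn) (auto simp: cmp_def min_def)
  next
    case 5
    then have e: "min a b = b" "min b a = b" "min (a - 1) (b + 1) = b + 1" "min (b - 1) (a + 1) = b - 1" using assms by auto
    show ?thesis using 5 assms unfolding Pab_def e by (cases fi; cases fn) (auto simp: cmp_def min_def)
  qed
qed

lemma HV_gen: "HV n j = min (2 + GG n j) (min (if j mod 4 = 0 then g j else 2 + GG n j) (if (n - j) mod 4 = 0 then g (n - j) else 2 + GG n j))"
  unfolding HV_def using g_dvd[of j] g_dvd[of "n - j"] by simp

lemma q_mid:
  assumes n: "24 < n" and i: "i = j + 4" and k: "n - i = k + 4"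
  shows "cc n i + cc n (n - i) = Pab (g i) (g (n - i)) (i mod 4 = 0) ((n - i) mod 4 = 0)"
proof -
  have nn: "n = j + k + 8" using i k by simp
  have s1: "(i + (n - 4)) mod n = j"
  proof -
    have e: "i + (n - 4) = j + n" using i nn by simp
    have "j < n" using nn by simp
    then show ?thesis by (simp only: e mod_add_self2) simp
  qed
  have s2: "(n - i + (n - 4)) mod n = k"
  proof -
    have e: "n - i + (n - 4) = k + n" using k nn by simp
    have "k < n" using nn by simp
    then show ?thesis by (simp only: e mod_add_self2) simp
  qed
  have ga: "g i = g j + 1" using i g_plus4 by simp
  have gb: "g (n - i) = g k + 1" using k g_plus4 by simp
  have e1: "n - j = (n - i) + 4" using i k by simp
  have gnj: "g (n - j) = g (n - i) + 1" by (simp only: e1 g_plus4)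
  have e2: "n - k = i + 4" using i k by simp
  have gnk: "g (n - k) = g i + 1" by (simp only: e2 g_plus4)
  have nni: "n - (n - i) = i" using nn i by simp
  have mj: "j mod 4 = i mod 4" "(n - j) mod 4 = (n - i) mod 4" unfolding i e1 mod_add_self2 by simp_all
  have mk: "k mod 4 = (n - i) mod 4" "(n - k) mod 4 = i mod 4" unfolding k e2 mod_add_self2 by simp_all
  have GGi: "GG n i = min (g i) (g (n - i))" by (simp add: GG_def)
  have GGni: "GG n (n - i) = min (g (n - i)) (g i)" by (simp add: GG_def nni)
  have GGj: "GG n j = min (g i - 1) (g (n - i) + 1)" by (simp add: GG_def ga gnj)
  have GGk: "GG n k = min (g (n - i) - 1) (g i + 1)" by (simp add: GG_def gb gnk)
  have le1: "g i + 2 \<le> i" "g (n - i) + 2 \<le> n - i" using g_le2 i k by auto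
  have FUi: "FU n i = 2 + min (g i) (g (n - i))" unfolding FU_def GGi using le1 by simp
  have FUni: "FU n (n - i) = 2 + min (g (n - i)) (g i)" unfolding FU_def GGni nni using le1 by simp
  have HVj: "HV n j = min (2 + min (g i - 1) (g (n - i) + 1)) (min (if i mod 4 = 0 then g i - 1 else 2 + min (g i - 1) (g (n - i) + 1)) (if (n - i) mod 4 = 0 then g (n - i) + 1 else 2 + min (g i - 1) (g (n - i) + 1)))"
    unfolding HV_gen[of n j] GGj mj gnj using ga by simp
  have HVk: "HV n k = min (2 + min (g (n - i) - 1) (g i + 1)) (min (if (n - i) mod 4 = 0 then g (n - i) - 1 else 2 + min (g (n - i) - 1) (g i + 1)) (if i mod 4 = 0 then g i + 1 else 2 + min (g (n - i) - 1) (g i + 1)))"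
    unfolding HV_gen[of n k] GGk mk gnk using gb by simp
  show ?thesis unfolding cc_def s1 s2 FUi FUni HVj HVk FV_def GGi GGni GGj GGk Pab_def by (simp only: add.assoc)
qed


lemma q_le:
  assumes n: "24 < n" and i: "4 \<le> i" "i + 4 \<le> n"
  shows "cc n i + cc n (n - i) \<le> 0 \<and> (i mod 4 = 0 \<longrightarrow> g i + 2 \<le> g (n - i) \<longrightarrow> cc n i + cc n (n - i) \<le> -2)"
proof -
  have e: "cc n i + cc n (n - i) = Pab (g i) (g (n - i)) (i mod 4 = 0) ((n - i) mod 4 = 0)"
    by (rule q_mid[OF n, of i "i - 4" "n - i - 4"]) (use i in auto)
  have "1 \<le> g i" "1 \<le> g (n - i)" using g_pos[of i] g_pos[of "n - i"] i by auto
  from Pab_bound[OF this, of "i mod 4 = 0" "(n - i) mod 4 = 0"] show ?thesis unfolding e by blast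
qed

lemma shift: fixes i n :: nat shows "i < n \<Longrightarrow> 4 \<le> n \<Longrightarrow> (i + (n - 4)) mod n = (if 4 \<le> i then i - 4 else i + n - 4)"
proof -
  assume a: "i < n" "4 \<le> n"
  show ?thesis
  proof (cases "4 \<le> i")
    case True
    then have e: "i + (n - 4) = (i - 4) + n" using a by simp
    have "i - 4 < n" using a by simp
    then show ?thesis using True by (simp only: e mod_add_self2) simp
  qed (use a in simp)
qed

lemma sh1: fixes k n :: nat shows "k < 4 \<Longrightarrow> 4 \<le> n \<Longrightarrow> (k + (n - 4)) mod n = n - (4 - k)"
proof -
  assume a: "k < 4" "4 \<le> n"
  then have "k + (n - 4) = n - (4 - k)" "n - (4 - k) < n" by auto
  then show ?thesis by simp
qed

lemma sh2: fixes d n :: nat shows "1 \<le> d \<Longrightarrow> d + 4 \<le> n \<Longrightarrow> (n - d + (n - 4)) mod n = n - (d + 4)"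
proof -
  assume a: "1 \<le> d" "d + 4 \<le> n"
  then have e: "n - d + (n - 4) = (n - (d + 4)) + n" by simp
  have "n - (d + 4) < n" using a by simp
  then show ?thesis by (simp only: e mod_add_self2) simp
qed

lemma HV_right8: "56 \<le> n \<Longrightarrow> i < n \<Longrightarrow> n - i \<le> 8 \<Longrightarrow> HV n i = (if (n - i) mod 4 = 0 then min (2 + g (n - i)) ((n - i) div 4) else 2 + g (n - i))"
proof -
  assume a: "56 \<le> n" "i < n" "n - i \<le> 8"
  have e: "GG n i = g (n - i)" using a by (intro GG_right) auto
  have "2 + g (n - i) \<le> 2 + ((n - i) div 4 + 2)" using g_le'[of "n - i"] by simp
  also have "\<dots> \<le> 6" using a by simp
  also have "6 \<le> i div 4" using a by simp
  finally show ?thesis unfolding HV_def e by (auto simp: min_def)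
qed

lemma FU_right: "24 < n \<Longrightarrow> i < n \<Longrightarrow> n - i \<le> 8 \<Longrightarrow> FU n i = min (n - i) (2 + g (n - i))"
proof -
  assume a: "24 < n" "i < n" "n - i \<le> 8"
  have "min i (n - i) = n - i" using a by simp
  then show ?thesis using GG_right[OF a] unfolding FU_def by simp
qed

lemma FU_left: "24 < n \<Longrightarrow> i \<le> 8 \<Longrightarrow> FU n i = min i (2 + g i)"
proof -
  assume a: "24 < n" "i \<le> 8"
  have "min i (n - i) = i" using a by simp
  then show ?thesis using GG_left[OF a] unfolding FU_def by simp
qed

lemma ends:
  assumes n: "56 \<le> n"
  shows "cc n 0 = 1" "cc n 1 + cc n (n - 1) = 4" "cc n 2 + cc n (n - 2) = 4" "cc n 3 + cc n (n - 3) = 1"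
proof -
  have n': "24 < n" "4 \<le> n" using n by auto
  have sh: "((0::nat) + (n - 4)) mod n = n - 4" "(1 + (n - 4)) mod n = n - 3" "(2 + (n - 4)) mod n = n - 2"
    "(3 + (n - 4)) mod n = n - 1" "(n - 1 + (n - 4)) mod n = n - 5" "(n - 2 + (n - 4)) mod n = n - 6"
    "(n - 3 + (n - 4)) mod n = n - 7"
    using sh1[of 0 n] sh1[of 1 n] sh1[of 2 n] sh1[of 3 n] sh2[of 1 n] sh2[of 2 n] sh2[of 3 n] n
    by simp_all
  have FVr: "FV n (n - d) = 1 + g d" if "1 \<le> d" "d \<le> 8" for d
    using GG_right[OF n'(1), of "n - d"] that n by (simp add: FV_def)
  have FVl: "FV n d = 1 + g d" if "d \<le> 8" for d
    using GG_left[OF n'(1), of d] that by (simp add: FV_def)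
  have HVr: "HV n (n - d) = (if d mod 4 = 0 then min (2 + g d) (d div 4) else 2 + g d)" if "1 \<le> d" "d \<le> 8" for d
    using HV_right8[OF n, of "n - d"] that n by simp
  have FUr: "FU n (n - d) = min d (2 + g d)" if "1 \<le> d" "d \<le> 8" for d
    using FU_right[OF n'(1), of "n - d"] that n by simp
  have FUl: "FU n d = min d (2 + g d)" if "d \<le> 8" for d
    using FU_left[OF n'(1), of d] that by simp
  show "cc n 0 = 1" unfolding cc_def sh
    using FUl[of 0] FVr[of 4] FVl[of 0] HVr[of 4] by (simp add: g_small cmp_def)
  show "cc n 1 + cc n (n - 1) = 4" unfolding cc_def sh
    using FUl[of 1] FVr[of 3] FVl[of 1] HVr[of 3] FUr[of 1] FVr[of 5] FVr[of 1] HVr[of 5] by (simp add: g_small cmp_def)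
  show "cc n 2 + cc n (n - 2) = 4" unfolding cc_def sh
    using FUl[of 2] FVr[of 2] FVl[of 2] HVr[of 2] FUr[of 2] FVr[of 6] HVr[of 6] by (simp add: g_small cmp_def)
  show "cc n 3 + cc n (n - 3) = 1" unfolding cc_def sh
    using FUl[of 3] FVr[of 1] FVl[of 3] HVr[of 1] FUr[of 3] FVr[of 7] FVr[of 3] HVr[of 7] by (simp add: g_small cmp_def)
qed


lemma p4:
  assumes n: "56 \<le> n" and i: "i \<in> {4, 8, 12, 16, 20, 24}"
  shows "cc n i + cc n (n - i) \<le> -2"
proof -
  have i4: "i mod 4 = 0" "4 \<le> i" "i \<le> 24" using i by auto
  have "i + 8 \<le> n - i" using i4 n by simp
  then have "(i + 8) div 4 \<le> (n - i) div 4" by (rule div_le_mono)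
  moreover have "(i + 8) div 4 = i div 4 + 2" by simp
  ultimately have "g i + 2 \<le> g (n - i)" using g_dvd[OF i4(1)] g_ge[of "n - i"] by simp
  then show ?thesis using q_le[of n i] i4 n by simp
qed

lemma invol: "a < n \<Longrightarrow> (n - (n - a) mod n) mod n = (a::nat)"
proof (cases "a = 0")
  case False
  assume a: "a < n"
  then have "(n - a) mod n = n - a" using False by simp
  then show ?thesis using a by simp
qed simp

lemma sum_involution:
  fixes f :: "nat \<Rightarrow> int"
  shows "(\<Sum>i<n. f ((n - i) mod n)) = (\<Sum>i<n. f i)"
proof (rule sum.reindex_bij_witness[of _ "\<lambda>i. (n - i) mod n" "\<lambda>i. (n - i) mod n"])
qed (auto simp: invol)

lemma large:
  assumes n: "56 \<le> n"
  shows "(\<Sum>i<n. cc n i) < 0"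
proof -
  define q where "q i = cc n i + cc n ((n - i) mod n)" for i
  have two: "2 * (\<Sum>i<n. cc n i) = (\<Sum>i<n. q i)"
    unfolding q_def sum.distrib sum_involution[of "cc n"] by simp
  define B :: "nat set" where "B = {1, 2, 3, 4, 8, 12, 16, 20, 24}"
  define A where "A = {0} \<union> B \<union> (\<lambda>k. n - k) ` B"
  have Bb: "\<And>k. k \<in> B \<Longrightarrow> 1 \<le> k \<and> k \<le> 24" unfolding B_def by auto
  have finB: "finite B" unfolding B_def by simp
  have AS: "A \<subseteq> {..<n}" unfolding A_def using Bb n by force
  have off: "q i \<le> 0" if "i \<in> {..<n} - A" for i
  proof -
    have i: "i < n" "i \<notin> A" using that by auto
    have "i \<noteq> 0" "i \<notin> B" "i \<notin> (\<lambda>k. n - k) ` B" using i(2) unfolding A_def by auto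
    then have "i \<noteq> 0" "i \<noteq> 1" "i \<noteq> 2" "i \<noteq> 3" "i \<noteq> n - 1" "i \<noteq> n - 2" "i \<noteq> n - 3"
      unfolding B_def by auto
    then have "4 \<le> i" "i + 4 \<le> n" using i(1) by auto
    moreover have "(n - i) mod n = n - i" using \<open>i \<noteq> 0\<close> i(1) by simp
    ultimately show ?thesis using q_le[of n i] n unfolding q_def by simp
  qed
  have "(\<Sum>i<n. q i) = (\<Sum>i\<in>{..<n} - A. q i) + (\<Sum>i\<in>A. q i)"
    by (rule sum.subset_diff[OF AS]) simp
  also have "(\<Sum>i\<in>{..<n} - A. q i) \<le> 0" by (rule sum_nonpos) (use off in blast)
  finally have le: "(\<Sum>i<n. q i) \<le> (\<Sum>i\<in>A. q i)" by simp
  have qsym: "q (n - k) = q k" if "k \<in> B" for k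
  proof -
    have "1 \<le> k" "k < n" using Bb[OF that] n by auto
    then have "(n - k) mod n = n - k" "(n - (n - k)) mod n = k" "n - (n - k) = k" by auto
    then show ?thesis unfolding q_def by simp
  qed
  have qB: "q k = cc n k + cc n (n - k)" if "k \<in> B" for k
  proof -
    have "1 \<le> k" "k < n" using Bb[OF that] n by auto
    then show ?thesis unfolding q_def by simp
  qed
  have d1: "0 \<notin> B \<union> (\<lambda>k. n - k) ` B" using Bb n by force
  have d2: "B \<inter> (\<lambda>k. n - k) ` B = {}"
  proof (rule equals0I)
    fix x assume "x \<in> B \<inter> (\<lambda>k. n - k) ` B"
    then obtain k where "x \<in> B" "k \<in> B" "x = n - k" by auto
    then show False using Bb[of x] Bb[of k] n by linarith
  qed
  have inj: "inj_on (\<lambda>k. n - k) B" unfolding inj_on_def using Bb n by force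
  have "(\<Sum>i\<in>A. q i) = q 0 + ((\<Sum>i\<in>B. q i) + (\<Sum>i\<in>(\<lambda>k. n - k) ` B. q i))"
    unfolding A_def using d1 d2 finB by (simp add: sum.union_disjoint)
  also have "(\<Sum>i\<in>(\<lambda>k. n - k) ` B. q i) = (\<Sum>i\<in>B. q i)"
    by (simp add: sum.reindex[OF inj] qsym)
  also have "(\<Sum>i\<in>B. q i) = (\<Sum>k\<in>B. cc n k + cc n (n - k))"
    by (rule sum.cong[OF refl qB])
  finally have SA: "(\<Sum>i\<in>A. q i) = q 0 + 2 * (\<Sum>k\<in>B. cc n k + cc n (n - k))" by simp
  have q0: "q 0 = 2" unfolding q_def using ends(1)[OF n] by simp
  have "(\<Sum>k\<in>B. cc n k + cc n (n - k)) \<le> -3"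
  proof -
    have S: "(\<Sum>k\<in>B. cc n k + cc n (n - k)) = (cc n 1 + cc n (n - 1)) + (cc n 2 + cc n (n - 2)) + (cc n 3 + cc n (n - 3))
      + (cc n 4 + cc n (n - 4)) + (cc n 8 + cc n (n - 8)) + (cc n 12 + cc n (n - 12)) + (cc n 16 + cc n (n - 16))
      + (cc n 20 + cc n (n - 20)) + (cc n 24 + cc n (n - 24))"
      unfolding B_def by (simp add: add.assoc)
    show ?thesis unfolding S using ends(2-4)[OF n] p4[OF n, of 4] p4[OF n, of 8] p4[OF n, of 12]
      p4[OF n, of 16] p4[OF n, of 20] p4[OF n, of 24] by simp
  qed
  then show ?thesis using two le SA q0 by linarith
qed



lemma small_check: "list_all (\<lambda>n. sum_list (map (cc n) [0..<n]) < 0) [25..<56]"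
  by code_simp

lemma small:
  assumes "24 < n" "n < 56"
  shows "(\<Sum>i<n. cc n i) < 0"
proof -
  have "n \<in> set [25..<56]" unfolding set_upt using assms by simp
  then have "sum_list (map (cc n) [0..<n]) < 0" using small_check unfolding list_all_iff by blast
  moreover have "sum_list (map (cc n) [0..<n]) = (\<Sum>i<n. cc n i)"
    by (simp add: interv_sum_list_conv_sum_set_nat atLeast0LessThan)
  ultimately show ?thesis by simp
qed

theorem proposition3p2:
  fixes n :: nat
  assumes "n > 24"
  shows "\<not> distance_balanced 2 (gp_verts n) (gp_adj n 4)"
proof
  assume db: "distance_balanced 2 (gp_verts n) (gp_adj n 4)"
  have n: "24 < n" using assms by simp
  have xV: "(False, 0) \<in> gp_verts n" and yV: "(True, 4) \<in> gp_verts n" using n by (auto simp: gp_verts_def)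
  have "(0 + (n - 4)) mod n = n - 4" using n by simp
  then have "fy n (False, 0) = FV n (n - 4)" by (simp add: fy_def hh_def rot_def)
  also have "\<dots> = 2" using GG_right[OF n, of "n - 4"] n by (simp add: FV_def g_small)
  finally have d2: "gdist (gp_verts n) (gp_adj n 4) (False, 0) (True, 4) = 2"
    using dist_y[OF n xV] by simp
  have "(\<Sum>i<n. cc n i) < 0"
  proof (cases "n < 56")
    case True
    then show ?thesis using small n by blast
  next
    case False
    then show ?thesis using large by simp
  qed
  then have "card (W_set (gp_verts n) (gp_adj n 4) (False, 0) (True, 4)) \<noteq> card (W_set (gp_verts n) (gp_adj n 4) (True, 4) (False, 0))"
    using diff_sum[OF n] by linarith
  then show False using db d2 xV yV unfolding distance_balanced_def by blast
qed


end
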